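(* For each $n\ge 5$ there exists a packing of $n$ squares whose radii form an algebraically independent set and which has more than $2n-2$ contacts.
   Context: Let $S=\{(x,y): -1\le x,y\le 1\}$ and for $\theta\in[0,\pi/2)$ let $R_\theta$ be the matrix of anticlockwise rotation by $\theta$. A similar copy of $S$ is a set $rR_\theta S+p$ with $r>0$, $p\in\mathbb{R}^2$, $\theta\in[0,\pi/2)$. A packing of $n$ squares is a set $\{S_1,\ldots,S_n\}$ of similar copies $S_i=r_iR_{\theta_i}S+p_i$ of $S$ whose interiors are pairwise disjoint; $r_1,\ldots,r_n$ are its radii. A contact is an unordered pair $\{i,j\}$, $i\ne j$, with $S_i\cap S_j\ne\emptyset$. *)

theory Defs
  imports "HOL-Analysis.Analysis"
begin

definition std_square :: "(real \<times> real) set" where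
  "std_square = {(x, y). -1 \<le> x \<and> x \<le> 1 \<and> -1 \<le> y \<and> y \<le> 1}"

definition rot :: "real \<Rightarrow> real \<times> real \<Rightarrow> real \<times> real" where
  "rot t v = (cos t * fst v - sin t * snd v, sin t * fst v + cos t * snd v)"

definition sim_copy :: "real \<Rightarrow> real \<Rightarrow> real \<times> real \<Rightarrow> (real \<times> real) set" where
  "sim_copy r t p = (\<lambda>v. r *\<^sub>R rot t v + p) ` std_square"

definition is_packing :: "nat \<Rightarrow> (nat \<Rightarrow> real) \<Rightarrow> (nat \<Rightarrow> real) \<Rightarrow> (nat \<Rightarrow> real \<times> real) \<Rightarrow> bool" where
  "is_packing n r t p \<longleftrightarrow>
     (\<forall>i<n. 0 < r i \<and> 0 \<le> t i \<and> t i < pi / 2) \<and>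
     (\<forall>i<n. \<forall>j<n. i \<noteq> j \<longrightarrow>
        interior (sim_copy (r i) (t i) (p i)) \<inter> interior (sim_copy (r j) (t j) (p j)) = {})"

definition contacts :: "nat \<Rightarrow> (nat \<Rightarrow> real) \<Rightarrow> (nat \<Rightarrow> real) \<Rightarrow> (nat \<Rightarrow> real \<times> real) \<Rightarrow> (nat \<times> nat) set" where
  "contacts n r t p = {(i, j). i < j \<and> j < n \<and>
       sim_copy (r i) (t i) (p i) \<inter> sim_copy (r j) (t j) (p j) \<noteq> {}}"

text \<open>A polynomial
  is given by a finite set M of exponent vectors (supported in {0..<n}) and rational
  coefficients c.\<close>
definition alg_indep :: "nat \<Rightarrow> (nat \<Rightarrow> real) \<Rightarrow> bool" where
  "alg_indep n r \<longleftrightarrow>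
     (\<forall>(M :: (nat \<Rightarrow> nat) set) (c :: (nat \<Rightarrow> nat) \<Rightarrow> real).
        finite M \<longrightarrow> (\<forall>\<alpha>\<in>M. c \<alpha> \<in> \<rat>) \<longrightarrow> (\<forall>\<alpha>\<in>M. \<forall>i\<ge>n. \<alpha> i = 0) \<longrightarrow>
        (\<Sum>\<alpha>\<in>M. c \<alpha> * (\<Prod>i<n. r i ^ \<alpha> i)) = 0 \<longrightarrow> (\<forall>\<alpha>\<in>M. c \<alpha> = 0))"

end

theory Submission
  imports Defs "HOL-Library.Countable" "HOL-Computational_Algebra.Polynomial"
begin


datatype pexpr = PCst rat | PVar nat | PAdd pexpr pexpr | PMul pexpr pexpr

instance pexpr :: countable by countable_datatype

fun peval :: "(nat \<Rightarrow> real) \<Rightarrow> pexpr \<Rightarrow> real" where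
  "peval r (PCst q) = of_rat q"
| "peval r (PVar i) = r i"
| "peval r (PAdd e1 e2) = peval r e1 + peval r e2"
| "peval r (PMul e1 e2) = peval r e1 * peval r e2"

definition EV :: "(nat \<Rightarrow> real) \<Rightarrow> real set" where "EV r = range (peval r)"

lemma EV_countable: "countable (EV r)" unfolding EV_def by simp

lemma EV_rat: "q \<in> \<rat> \<Longrightarrow> q \<in> EV r"
  unfolding EV_def by (metis Rats_cases peval.simps(1) rangeI)

lemma EV_var: "r i \<in> EV r"
  unfolding EV_def by (metis peval.simps(2) rangeI)

lemma EV_add: "x \<in> EV r \<Longrightarrow> y \<in> EV r \<Longrightarrow> x + y \<in> EV r"
proof -
  assume "x \<in> EV r" "y \<in> EV r"
  then obtain e1 e2 where "x = peval r e1" "y = peval r e2" unfolding EV_def by auto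
  then have "x + y = peval r (PAdd e1 e2)" by simp
  then show ?thesis unfolding EV_def by blast
qed

lemma EV_mul: "x \<in> EV r \<Longrightarrow> y \<in> EV r \<Longrightarrow> x * y \<in> EV r"
proof -
  assume "x \<in> EV r" "y \<in> EV r"
  then obtain e1 e2 where "x = peval r e1" "y = peval r e2" unfolding EV_def by auto
  then have "x * y = peval r (PMul e1 e2)" by simp
  then show ?thesis unfolding EV_def by blast
qed

lemma EV_pow: "x \<in> EV r \<Longrightarrow> x ^ k \<in> EV r"
  by (induction k) (auto intro: EV_mul EV_rat)

lemma EV_prod: "(\<And>i. i \<in> A \<Longrightarrow> f i \<in> EV r) \<Longrightarrow> prod f A \<in> EV r"
proof (induction A rule: infinite_finite_induct)
  case (infinite A) then show ?case by (simp add: EV_rat)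
next
  case empty then show ?case by (simp add: EV_rat)
next
  case (insert x F) then show ?case by (simp add: EV_mul)
qed

lemma EV_sum: "(\<And>i. i \<in> A \<Longrightarrow> f i \<in> EV r) \<Longrightarrow> sum f A \<in> EV r"
proof (induction A rule: infinite_finite_induct)
  case (infinite A) then show ?case by (simp add: EV_rat)
next
  case empty then show ?case by (simp add: EV_rat)
next
  case (insert x F) then show ?case by (simp add: EV_add)
qed

lemma polyval_EV:
  "(\<forall>\<alpha>\<in>M. c \<alpha> \<in> \<rat>) \<Longrightarrow> (\<Sum>\<alpha>\<in>M. c \<alpha> * (\<Prod>i<k. r i ^ \<alpha> i)) \<in> EV r"
  by (intro EV_sum EV_mul EV_prod EV_pow EV_var) (auto intro: EV_rat)

definition ZR :: "(nat \<Rightarrow> real) \<Rightarrow> real set" where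
  "ZR r = {z. \<exists>P. P \<noteq> 0 \<and> (\<forall>j. coeff P j \<in> EV r) \<and> poly P z = 0}"

lemma ZR_countable: "countable (ZR r)"
proof -
  let ?PS = "{P :: real poly. P \<noteq> 0 \<and> (\<forall>j. coeff P j \<in> EV r)}"
  have sub: "?PS \<subseteq> Poly ` lists (EV r)"
  proof
    fix P assume "P \<in> ?PS"
    then have a: "range (coeff P) \<subseteq> EV r" by auto
    have "set (coeffs P) \<subseteq> range (coeff P)" unfolding range_coeff by (rule subset_insertI)
    with a have "set (coeffs P) \<subseteq> EV r" by (rule subset_trans[rotated])
    then have "coeffs P \<in> lists (EV r)" by auto
    then show "P \<in> Poly ` lists (EV r)" by (metis Poly_coeffs image_eqI)
  qed
  have "countable (lists (EV r))" using EV_countable by (rule countable_lists)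
  then have "countable (Poly ` lists (EV r))" by (rule countable_image)
  then have c: "countable ?PS" using sub by (rule countable_subset[rotated])
  have fin: "countable {z. poly P z = 0}" if "P \<in> ?PS" for P
    using that poly_roots_finite[of P] by (simp add: countable_finite)
  have "ZR r = (\<Union>P\<in>?PS. {z. poly P z = 0})" unfolding ZR_def by blast
  moreover have "countable (\<Union>P\<in>?PS. {z. poly P z = 0})"
    using c fin by (rule countable_UN)
  ultimately show ?thesis by simp
qed

lemma alg_indep_0: "alg_indep 0 r"
  unfolding alg_indep_def
proof (intro allI impI)
  fix M :: "(nat \<Rightarrow> nat) set" and c :: "(nat \<Rightarrow> nat) \<Rightarrow> real"
  assume fin: "finite M" and "\<forall>\<alpha>\<in>M. c \<alpha> \<in> \<rat>" and supp: "\<forall>\<alpha>\<in>M. \<forall>i\<ge>0. \<alpha> i = 0"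
    and s: "(\<Sum>\<alpha>\<in>M. c \<alpha> * (\<Prod>i<0. r i ^ \<alpha> i)) = 0"
  have sub: "M \<subseteq> {\<lambda>_. 0}" using supp by auto
  show "\<forall>\<alpha>\<in>M. c \<alpha> = 0"
  proof (cases "M = {}")
    case False
    then have "M = {\<lambda>_. 0}" using sub by auto
    then show ?thesis using s by simp
  qed simp
qed

lemma alg_indep_step:
  assumes AI: "alg_indep k r" and xZ: "x \<notin> ZR r"
  shows "alg_indep (Suc k) (r(k := x))"
  unfolding alg_indep_def
proof (intro allI impI)
  fix M :: "(nat \<Rightarrow> nat) set" and c :: "(nat \<Rightarrow> nat) \<Rightarrow> real"
  assume fin: "finite M" and rat: "\<forall>\<alpha>\<in>M. c \<alpha> \<in> \<rat>" and supp: "\<forall>\<alpha>\<in>M. \<forall>i\<ge>Suc k. \<alpha> i = 0"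
    and sum0: "(\<Sum>\<alpha>\<in>M. c \<alpha> * (\<Prod>i<Suc k. (r(k := x)) i ^ \<alpha> i)) = 0"
  define m where "m \<alpha> = (\<Prod>i<k. r i ^ \<alpha> i)" for \<alpha> :: "nat \<Rightarrow> nat"
  define q where "q j = (\<Sum>\<alpha>\<in>{\<alpha>\<in>M. \<alpha> k = j}. c \<alpha> * m \<alpha>)" for j
  define J where "J = (\<lambda>\<alpha>. \<alpha> k) ` M"
  have finJ: "finite J" using fin J_def by simp
  have prodeq: "(\<Prod>i<Suc k. (r(k := x)) i ^ \<alpha> i) = m \<alpha> * x ^ \<alpha> k" for \<alpha>
  proof -
    have "(\<Prod>i<k. (r(k := x)) i ^ \<alpha> i) = m \<alpha>"
      unfolding m_def by (intro prod.cong) auto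
    then show ?thesis by (simp add: lessThan_Suc)
  qed
  have "(\<Sum>\<alpha>\<in>M. c \<alpha> * (m \<alpha> * x ^ \<alpha> k)) = (\<Sum>j\<in>J. (\<Sum>\<alpha>\<in>{\<alpha>\<in>M. \<alpha> k = j}. c \<alpha> * (m \<alpha> * x ^ \<alpha> k)))"
    unfolding J_def using fin by (rule sum.image_gen)
  also have "\<dots> = (\<Sum>j\<in>J. q j * x ^ j)"
    unfolding q_def sum_distrib_right
    by (intro sum.cong refl) (auto simp: mult.assoc)
  finally have e1: "(\<Sum>\<alpha>\<in>M. c \<alpha> * (m \<alpha> * x ^ \<alpha> k)) = (\<Sum>j\<in>J. q j * x ^ j)" .
  have e2: "(\<Sum>\<alpha>\<in>M. c \<alpha> * (\<Prod>i<Suc k. (r(k := x)) i ^ \<alpha> i)) = (\<Sum>\<alpha>\<in>M. c \<alpha> * (m \<alpha> * x ^ \<alpha> k))"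
    by (simp only: prodeq)
  have s1: "(\<Sum>j\<in>J. q j * x ^ j) = 0" using sum0 e1 e2 by simp
  define P where "P = (\<Sum>j\<in>J. monom (q j) j)"
  have polyP: "poly P x = 0" unfolding P_def poly_sum poly_monom using s1 by simp
  have coeffP: "coeff P j = (if j \<in> J then q j else 0)" for j
    unfolding P_def coeff_sum coeff_monom using finJ by simp
  have qEV: "q j \<in> EV r" for j
    unfolding q_def m_def using rat by (intro polyval_EV) auto
  have "P = 0"
  proof (rule ccontr)
    assume "P \<noteq> 0"
    moreover have "\<forall>j. coeff P j \<in> EV r" using coeffP qEV EV_rat[of 0 r] by simp
    ultimately have "x \<in> ZR r" using polyP unfolding ZR_def by blast
    then show False using xZ by simp
  qed
  then have qz: "q j = 0" if "j \<in> J" for j using coeffP[of j] that by simp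
  show "\<forall>\<alpha>\<in>M. c \<alpha> = 0"
  proof
    fix \<alpha>0 assume a0: "\<alpha>0 \<in> M"
    define j where "j = \<alpha>0 k"
    define Mj where "Mj = {\<alpha>\<in>M. \<alpha> k = j}"
    define h where "h \<alpha> = \<alpha>(k := 0)" for \<alpha> :: "nat \<Rightarrow> nat"
    define c' where "c' \<beta> = c (\<beta>(k := j))" for \<beta> :: "nat \<Rightarrow> nat"
    have hinv: "(h \<alpha>)(k := j) = \<alpha>" if "\<alpha> \<in> Mj" for \<alpha>
      using that unfolding h_def Mj_def by auto
    have inj: "inj_on h Mj" by (metis hinv inj_onI)
    have finMj: "finite Mj" using fin Mj_def by simp
    have hi: "(h \<alpha>) i = \<alpha> i" if "i < k" for \<alpha> i using that h_def by simp
    have "(\<Sum>\<beta>\<in>h ` Mj. c' \<beta> * (\<Prod>i<k. r i ^ \<beta> i)) = (\<Sum>\<alpha>\<in>Mj. c' (h \<alpha>) * (\<Prod>i<k. r i ^ (h \<alpha>) i))"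
      using inj by (simp add: sum.reindex)
    also have "\<dots> = (\<Sum>\<alpha>\<in>Mj. c \<alpha> * m \<alpha>)"
      unfolding m_def c'_def using hinv hi by (intro sum.cong refl) auto
    also have "\<dots> = 0" using qz[of j] a0 unfolding q_def Mj_def J_def j_def by auto
    finally have s2: "(\<Sum>\<beta>\<in>h ` Mj. c' \<beta> * (\<Prod>i<k. r i ^ \<beta> i)) = 0" .
    have r2: "\<forall>\<beta>\<in>h ` Mj. c' \<beta> \<in> \<rat>" using hinv rat Mj_def c'_def by auto
    have su2: "\<forall>\<beta>\<in>h ` Mj. \<forall>i\<ge>k. \<beta> i = 0"
    proof (intro ballI allI impI)
      fix \<beta> i assume "\<beta> \<in> h ` Mj" "k \<le> i"
      then obtain \<alpha> where "\<alpha> \<in> Mj" "\<beta> = h \<alpha>" by auto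
      then show "\<beta> i = 0" using supp \<open>k \<le> i\<close> unfolding Mj_def h_def
        by (cases "i = k") auto
    qed
    have "\<forall>\<beta>\<in>h ` Mj. c' \<beta> = 0"
      using AI finMj r2 su2 s2 unfolding alg_indep_def by blast
    moreover have "\<alpha>0 \<in> Mj" using a0 Mj_def j_def by simp
    ultimately have "c' (h \<alpha>0) = 0" by blast
    then show "c \<alpha>0 = 0" using hinv[OF \<open>\<alpha>0 \<in> Mj\<close>] c'_def by simp
  qed
qed

lemma alg_indep_cong:
  assumes "\<And>i. i < n \<Longrightarrow> r i = r' i" "alg_indep n r" shows "alg_indep n r'"
proof -
  have "(\<Prod>i<n. r i ^ \<alpha> i) = (\<Prod>i<n. r' i ^ \<alpha> i)" for \<alpha>
    using assms(1) by (intro prod.cong) auto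
  then show ?thesis using assms(2) unfolding alg_indep_def by simp
qed

lemma exists_alg_indep:
  "(\<forall>i<n. lo i < hi i) \<Longrightarrow> \<exists>r. (\<forall>i<n. lo i < r i \<and> r i < hi i) \<and> alg_indep n r"
proof (induction n)
  case 0 then show ?case using alg_indep_0 by blast
next
  case (Suc n)
  then obtain r where r: "\<forall>i<n. lo i < r i \<and> r i < hi i" "alg_indep n r" by auto
  have "uncountable {lo n<..<hi n}" using Suc.prems by (simp add: uncountable_open_interval)
  then have "\<not> {lo n<..<hi n} \<subseteq> ZR r" using ZR_countable countable_subset by blast
  then obtain x where x1: "x \<in> {lo n<..<hi n}" and x2: "x \<notin> ZR r" unfolding subset_eq by blast
  have "alg_indep (Suc n) (r(n := x))" using alg_indep_step[OF r(2) x2] .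
  moreover have "\<forall>i<Suc n. lo i < (r(n := x)) i \<and> (r(n := x)) i < hi i"
  proof (intro allI impI)
    fix i assume "i < Suc n"
    then consider "i < n" | "i = n" by linarith
    then show "lo i < (r(n := x)) i \<and> (r(n := x)) i < hi i"
    proof cases
      case 1 then show ?thesis using r(1) by simp
    next
      case 2 then show ?thesis using x1 by simp
    qed
  qed
  ultimately show ?case by blast
qed



lemma rot0 [simp]: "rot 0 v = v" by (simp add: rot_def)

lemma mem_sim_copyI: "v \<in> std_square \<Longrightarrow> z = r *\<^sub>R rot t v + p \<Longrightarrow> z \<in> sim_copy r t p"
  unfolding sim_copy_def by blast

lemma box_mem:
  assumes "0 < r" "\<bar>fst z - fst p\<bar> \<le> r" "\<bar>snd z - snd p\<bar> \<le> r"
  shows "z \<in> sim_copy r 0 p"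
proof (rule mem_sim_copyI)
  let ?v = "((fst z - fst p) / r, (snd z - snd p) / r)"
  show "?v \<in> std_square" using assms unfolding std_square_def
    by (auto simp: abs_le_iff divide_le_eq le_divide_eq)
  show "z = r *\<^sub>R rot 0 ?v + p" using assms(1) by (simp add: prod_eq_iff)
qed

lemma abs_bnd: "\<bar>v::real\<bar> \<le> 1 \<Longrightarrow> A * v \<le> \<bar>A\<bar>"
proof -
  assume h: "\<bar>v\<bar> \<le> 1"
  have "A * v \<le> \<bar>A\<bar> * \<bar>v\<bar>" using abs_ge_self[of "A * v"] by (simp add: abs_mult)
  also have "\<dots> \<le> \<bar>A\<bar>" using h by (simp add: mult_left_le)
  finally show ?thesis .
qed

lemma abs_bnd': "\<bar>v::real\<bar> \<le> 1 \<Longrightarrow> - \<bar>A\<bar> \<le> A * v"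
proof -
  assume h: "\<bar>v\<bar> \<le> 1"
  have "(- A) * v \<le> \<bar>- A\<bar>" using abs_bnd[OF h] .
  then show ?thesis by simp
qed

lemma inner_sim:
  assumes "v \<in> std_square"
  shows "(w1, w2) \<bullet> (r *\<^sub>R rot t v + p) =
     r * ((w1 * cos t + w2 * sin t) * fst v + (w2 * cos t - w1 * sin t) * snd v) + (w1 * fst p + w2 * snd p)"
  by (simp add: inner_prod_def rot_def algebra_simps)

lemma half_le:
  assumes "0 < r" "r * (\<bar>w1 * cos t + w2 * sin t\<bar> + \<bar>w2 * cos t - w1 * sin t\<bar>) + (w1 * fst p + w2 * snd p) \<le> c"
  shows "sim_copy r t p \<subseteq> {z. (w1, w2) \<bullet> z \<le> c}"
proof
  fix z assume "z \<in> sim_copy r t p"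
  then obtain v where v: "v \<in> std_square" "z = r *\<^sub>R rot t v + p" unfolding sim_copy_def by blast
  have b1: "\<bar>fst v\<bar> \<le> 1" "\<bar>snd v\<bar> \<le> 1" using v(1) unfolding std_square_def by auto
  have "(w1 * cos t + w2 * sin t) * fst v + (w2 * cos t - w1 * sin t) * snd v
        \<le> \<bar>w1 * cos t + w2 * sin t\<bar> + \<bar>w2 * cos t - w1 * sin t\<bar>"
    by (rule add_mono[OF abs_bnd[OF b1(1)] abs_bnd[OF b1(2)]])
  then have "r * ((w1 * cos t + w2 * sin t) * fst v + (w2 * cos t - w1 * sin t) * snd v)
        \<le> r * (\<bar>w1 * cos t + w2 * sin t\<bar> + \<bar>w2 * cos t - w1 * sin t\<bar>)"
    using assms(1) by (simp add: mult_left_mono)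
  then show "z \<in> {z. (w1, w2) \<bullet> z \<le> c}" using assms(2) v inner_sim[OF v(1)] by simp
qed

lemma aux_neg: "0 < (r::real) \<Longrightarrow> - B \<le> Y \<Longrightarrow> - (r * B) \<le> r * Y"
proof -
  assume "0 < r" "- B \<le> Y"
  then have "r * (- B) \<le> r * Y" by (intro mult_left_mono) auto
  then show ?thesis by simp
qed

lemma half_ge:
  assumes "0 < r" "c \<le> (w1 * fst p + w2 * snd p) - r * (\<bar>w1 * cos t + w2 * sin t\<bar> + \<bar>w2 * cos t - w1 * sin t\<bar>)"
  shows "sim_copy r t p \<subseteq> {z. c \<le> (w1, w2) \<bullet> z}"
proof
  fix z assume "z \<in> sim_copy r t p"
  then obtain v where v: "v \<in> std_square" "z = r *\<^sub>R rot t v + p" unfolding sim_copy_def by blast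
  have b1: "\<bar>fst v\<bar> \<le> 1" "\<bar>snd v\<bar> \<le> 1" using v(1) unfolding std_square_def by auto
  have "- (\<bar>w1 * cos t + w2 * sin t\<bar> + \<bar>w2 * cos t - w1 * sin t\<bar>) \<le>
        (w1 * cos t + w2 * sin t) * fst v + (w2 * cos t - w1 * sin t) * snd v"
    using add_mono[OF abs_bnd'[OF b1(1), where A="w1 * cos t + w2 * sin t"] abs_bnd'[OF b1(2), where A="w2 * cos t - w1 * sin t"]] by linarith
  note calculation = this
  have "- (r * (\<bar>w1 * cos t + w2 * sin t\<bar> + \<bar>w2 * cos t - w1 * sin t\<bar>)) \<le>
        r * ((w1 * cos t + w2 * sin t) * fst v + (w2 * cos t - w1 * sin t) * snd v)"
    using aux_neg[OF assms(1) calculation] .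
  then show "z \<in> {z. c \<le> (w1, w2) \<bullet> z}" using assms(2) v inner_sim[OF v(1)] by simp
qed

lemma box_le:
  assumes "0 < r" "r * (\<bar>w1\<bar> + \<bar>w2\<bar>) + (w1 * fst p + w2 * snd p) \<le> c"
  shows "sim_copy r 0 p \<subseteq> {z. (w1, w2) \<bullet> z \<le> c}"
proof -
  have "r * (\<bar>w1 * cos 0 + w2 * sin 0\<bar> + \<bar>w2 * cos 0 - w1 * sin 0\<bar>) + (w1 * fst p + w2 * snd p) \<le> c"
    using assms(2) by simp
  from half_le[OF assms(1) this] show ?thesis .
qed

lemma box_ge:
  assumes "0 < r" "c \<le> (w1 * fst p + w2 * snd p) - r * (\<bar>w1\<bar> + \<bar>w2\<bar>)"
  shows "sim_copy r 0 p \<subseteq> {z. c \<le> (w1, w2) \<bullet> z}"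
proof -
  have "c \<le> (w1 * fst p + w2 * snd p) - r * (\<bar>w1 * cos 0 + w2 * sin 0\<bar> + \<bar>w2 * cos 0 - w1 * sin 0\<bar>)"
    using assms(2) by simp
  from half_ge[OF assms(1) this] show ?thesis .
qed

lemma sepL:
  fixes w :: "real \<times> real"
  assumes "w \<noteq> 0" "A \<subseteq> {z. w \<bullet> z \<le> c}" "B \<subseteq> {z. c' \<le> w \<bullet> z}" "c \<le> c'"
  shows "interior A \<inter> interior B = {}"
proof -
  have "interior A \<subseteq> {z. w \<bullet> z < c}"
    using interior_mono[OF assms(2)] interior_halfspace_le[OF assms(1)] by simp
  moreover have "interior B \<subseteq> {z. c' < w \<bullet> z}"
    using interior_mono[OF assms(3)] interior_halfspace_ge[OF assms(1)] by simp
  ultimately show ?thesis using assms(4) by fastforce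
qed

lemma sepR:
  fixes w :: "real \<times> real"
  assumes "w \<noteq> 0" "A \<subseteq> {z. c' \<le> w \<bullet> z}" "B \<subseteq> {z. w \<bullet> z \<le> c}" "c \<le> c'"
  shows "interior A \<inter> interior B = {}"
  using sepL[OF assms(1) assms(3) assms(2) assms(4)] by blast



lemma X_pt:
  assumes "0 < x" "cos tau = co" "sin tau = si" "0 \<le> s" "s \<le> 2 * x"
  shows "(x0 + s * co, s * si) \<in> sim_copy x tau (x0 + x * (co - si), x * (si + co))"
proof (rule mem_sim_copyI)
  let ?v = "(-1 + s / x, -1::real)"
  have "s / x \<le> 2" using assms by (simp add: divide_le_eq)
  moreover have "0 \<le> s / x" using assms by simp
  ultimately show "?v \<in> std_square" unfolding std_square_def by auto
  show "(x0 + s * co, s * si) = x *\<^sub>R rot tau ?v + (x0 + x * (co - si), x * (si + co))"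
    using assms(1) unfolding rot_def assms(2,3) by (simp add: prod_eq_iff algebra_simps)
qed

lemma contacts_mem:
  "z \<in> sim_copy (r i) (t i) (p i) \<Longrightarrow> z \<in> sim_copy (r j) (t j) (p j) \<Longrightarrow> i < j \<Longrightarrow> j < n
   \<Longrightarrow> (i, j) \<in> contacts n r t p"
  unfolding contacts_def by blast

theorem proposition22:
  fixes n :: nat
  assumes "n \<ge> 5"
  shows "\<exists>r t p. is_packing n r t p \<and> alg_indep n r \<and> card (contacts n r t p) > 2 * n - 2"
proof -
  define C where "C = 4 * real n + 20"
  define lo where "lo i = (if i = 0 then 4 else if i = 2 then C else if i = 4 then 13 else (1::real))" for i :: nat
  define hi where "hi i = lo i + 1" for i
  have "\<forall>i<n. lo i < hi i" by (simp add: hi_def)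
  then obtain r where rb: "\<forall>i<n. lo i < r i \<and> r i < hi i" and ai: "alg_indep n r"
    using exists_alg_indep by blast
  have n5: "5 \<le> n" using assms .
  have rb': "lo i < r i \<and> r i < hi i" if "i < n" for i using rb that by blast
  define a where "a = r 0"
  define b where "b = r 1"
  define c where "c = r 2"
  define d where "d = r 3"
  define x where "x = r 4"
  have ha: "4 < a" "a < 5" using rb'[of 0] n5 unfolding a_def lo_def hi_def by auto
  have hb: "1 < b" "b < 2" using rb'[of 1] n5 unfolding b_def lo_def hi_def by auto
  have hc: "C < c" using rb'[of 2] n5 unfolding c_def lo_def hi_def by auto
  have hd: "1 < d" "d < 2" using rb'[of 3] n5 unfolding d_def lo_def hi_def by auto
  have hx: "13 < x" using rb'[of 4] n5 unfolding x_def lo_def hi_def by auto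
  have hk: "1 < r k \<and> r k < 2" if "5 \<le> k" "k < n" for k
    using rb'[of k] that unfolding lo_def hi_def by auto
  have rpos: "0 < r i" if "i < n" for i
  proof -
    have "1 \<le> lo i" unfolding lo_def C_def by auto
    then show ?thesis using rb'[OF that] by linarith
  qed
  define u where "u = (a - b) / b"
  have u1: "1 < u" unfolding u_def using ha hb by (simp add: less_divide_eq)
  define tau where "tau = arctan u"
  define co where "co = cos tau"
  define si where "si = sin tau"
  have u2: "0 < 1 + u\<^sup>2" by (simp add: add_pos_nonneg)
  have co_pos: "0 < co" unfolding co_def tau_def cos_arctan using u2 by simp
  have si_eq: "si = u * co" unfolding si_def co_def tau_def sin_arctan cos_arctan by simp
  have sc1: "si ^ 2 + co ^ 2 = 1" unfolding si_def co_def by simp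
  have si_pos: "0 < si" using si_eq u1 co_pos by simp
  have si_ge_co: "co \<le> si" using si_eq u1 co_pos by simp
  have rel: "si * b = co * (a - b)" using si_eq hb unfolding u_def by (simp add: field_simps)
  have si_half: "1 / 2 \<le> si"
  proof (rule ccontr)
    assume "\<not> 1 / 2 \<le> si"
    then have "si < 1/2" by simp
    then have "si * si < 1/2 * (1/2)" using si_pos by (intro mult_strict_mono) auto
    moreover have "co * co \<le> si * si" using si_ge_co co_pos by (intro mult_mono) auto
    ultimately show False using sc1 by (simp add: power2_eq_square)
  qed
  have tau_rng: "0 \<le> tau" "tau < pi / 2" unfolding tau_def using u1 arctan_bounded[of u] by auto
  define x0 where "x0 = - 2 * a * b / (a - b)"
  define pX where "pX = (x0 + x * (co - si), x * (si + co))"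
  define T where "T k = - 2 * d - 2 * (\<Sum>i\<in>{5..<k}. r i)" for k
  define t where "t i = (if i = 4 then tau else 0)" for i :: nat
  define p where "p i = (if i = 0 then (a, a) else if i = 1 then (- b, b) else if i = 2 then (- c, - c)
     else if i = 3 then (d, - d) else if i = 4 then pX else (r i, T i - r i))" for i
  define S where "S i = sim_copy (r i) (t i) (p i)" for i
  have S0: "S 0 = sim_copy a 0 (a, a)" by (simp add: S_def t_def p_def a_def)
  have S1: "S 1 = sim_copy b 0 (- b, b)" by (simp add: S_def t_def p_def b_def)
  have S2: "S 2 = sim_copy c 0 (- c, - c)" by (simp add: S_def t_def p_def c_def)
  have S3: "S 3 = sim_copy d 0 (d, - d)" by (simp add: S_def t_def p_def d_def)
  have S4: "S 4 = sim_copy x tau pX" by (simp add: S_def t_def p_def x_def)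
  have SY: "S k = sim_copy (r k) 0 (r k, T k - r k)" if "5 \<le> k" for k
    using that by (simp add: S_def t_def p_def)
  have x0_eq: "x0 + 2 * a * co / si = 0"
  proof -
    have q: "co / si = b / (a - b)" using rel si_pos ha hb by (simp add: field_simps)
    have "2 * a * co / si = 2 * a * (co / si)" by simp
    also have "\<dots> = 2 * a * b / (a - b)" unfolding q by simp
    finally show ?thesis unfolding x0_def by simp
  qed
  have x0_eq2: "x0 + 2 * b * co / si = - 2 * b"
  proof -
    have q: "co / si = b / (a - b)" using rel si_pos ha hb by (simp add: field_simps)
    have "2 * b * co / si = 2 * b * (co / si)" by simp
    also have "\<dots> = 2 * b * b / (a - b)" unfolding q by simp
    finally have e: "2 * b * co / si = 2 * b * b / (a - b)" .
    have "- 2 * a * b / (a - b) + 2 * b * b / (a - b) = (- 2 * a * b + 2 * b * b) / (a - b)"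
      by (simp add: add_divide_distrib diff_divide_distrib)
    also have "\<dots> = - 2 * b" using ha hb by (simp add: field_simps)
    finally show ?thesis unfolding x0_def e .
  qed
  have cV: "- si * x0 = 2 * a * co"
    using x0_eq si_pos by (simp add: field_simps)
  have x0_le: "x0 \<le> 0" unfolding x0_def using ha hb by (simp add: divide_nonneg_pos)
  have x0_ge: "- 2 * c \<le> x0"
  proof -
    have "a * b < 5 * 2" using ha hb by (intro mult_strict_mono) auto
    moreover have "5 * (a - b) = 5 * a - 5 * b" by simp
    ultimately have "a * b < 5 * (a - b)" using ha hb by linarith
    then have "a * b / (a - b) < 5" using ha hb by (simp add: divide_less_eq)
    moreover have "- 2 * a * b / (a - b) = - 2 * (a * b / (a - b))" by simp
    moreover have "20 < c" using hc C_def by simp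
    ultimately show ?thesis unfolding x0_def by linarith
  qed
  have xsi: "a \<le> x * si"
  proof -
    have "13 * (1/2) \<le> x * si" using hx si_half by (intro mult_mono) auto
    then show ?thesis using ha by linarith
  qed

  have apos: "0 < a" and bpos: "0 < b" and cpos: "0 < c" and dpos: "0 < d" and xpos: "0 < x"
    using ha hb hc hd hx C_def by auto
  have cos_tau: "cos tau = co" and sin_tau: "sin tau = si" using co_def si_def by auto
  have h0x: "S 0 \<subseteq> {z. 0 \<le> (1, 0) \<bullet> z}" unfolding S0 using apos by (intro box_ge) auto
  have h0y: "S 0 \<subseteq> {z. 0 \<le> (0, 1) \<bullet> z}" unfolding S0 using apos by (intro box_ge) auto
  have h0n: "S 0 \<subseteq> {z. (- si, co) \<bullet> z \<le> 2 * a * co}" unfolding S0 using apos si_pos co_pos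
    by (intro box_le) (auto simp: algebra_simps)
  have h1x: "S 1 \<subseteq> {z. (1, 0) \<bullet> z \<le> 0}" unfolding S1 using bpos by (intro box_le) auto
  have h1y: "S 1 \<subseteq> {z. 0 \<le> (0, 1) \<bullet> z}" unfolding S1 using bpos by (intro box_ge) auto
  have h1n: "S 1 \<subseteq> {z. (- si, co) \<bullet> z \<le> 2 * a * co}" unfolding S1 using bpos si_pos co_pos rel
    by (intro box_le) (auto simp: algebra_simps)
  have h2x: "S 2 \<subseteq> {z. (1, 0) \<bullet> z \<le> 0}" unfolding S2 using cpos by (intro box_le) auto
  have h2y: "S 2 \<subseteq> {z. (0, 1) \<bullet> z \<le> 0}" unfolding S2 using cpos by (intro box_le) auto
  have h3x: "S 3 \<subseteq> {z. 0 \<le> (1, 0) \<bullet> z}" unfolding S3 using dpos by (intro box_ge) auto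
  have h3y: "S 3 \<subseteq> {z. (0, 1) \<bullet> z \<le> 0}" unfolding S3 using dpos by (intro box_le) auto
  have h3y': "S 3 \<subseteq> {z. - 2 * d \<le> (0, 1) \<bullet> z}" unfolding S3 using dpos by (intro box_ge) auto
  have h4y: "S 4 \<subseteq> {z. 0 \<le> (0, 1) \<bullet> z}" unfolding S4
  proof (rule half_ge[OF xpos])
    show "0 \<le> 0 * fst pX + 1 * snd pX - x * (\<bar>0 * cos tau + 1 * sin tau\<bar> + \<bar>1 * cos tau - 0 * sin tau\<bar>)"
      unfolding cos_tau sin_tau pX_def using si_pos co_pos by simp
  qed
  have h4n: "S 4 \<subseteq> {z. 2 * a * co \<le> (- si, co) \<bullet> z}" unfolding S4
  proof (rule half_ge[OF xpos])
    have e1: "\<bar>- si * co + co * si\<bar> = 0" by simp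
    have e2: "\<bar>co * co - - si * si\<bar> = 1" using sc1 by (simp add: power2_eq_square)
    have e3: "- si * fst pX + co * snd pX = - si * x0 + x * (si ^ 2 + co ^ 2)"
      unfolding pX_def by (simp add: algebra_simps power2_eq_square)
    show "2 * a * co \<le> - si * fst pX + co * snd pX - x * (\<bar>- si * cos tau + co * sin tau\<bar> + \<bar>co * cos tau - - si * sin tau\<bar>)"
      unfolding cos_tau sin_tau e1 e2 e3 sc1 cV by simp
  qed
  have T_Suc: "T (Suc k) = T k - 2 * r k" if "5 \<le> k" for k
    using that unfolding T_def by simp
  have T5: "T 5 = - 2 * d" unfolding T_def by simp
  have sum_nonneg_r: "0 \<le> (\<Sum>i\<in>{5..<k}. r i)" if "k \<le> n" for k
    using that rpos by (intro sum_nonneg) (simp add: less_le_not_le)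
  have T_le: "T k \<le> - 2 * d" if "k \<le> n" for k
    using sum_nonneg_r[OF that] unfolding T_def by simp
  have rnn: "0 \<le> r i" if "i < n" for i using rpos[OF that] by simp
  have T_mono: "T k \<le> T j" if "j \<le> k" "k \<le> n" for j k
  proof -
    have "(\<Sum>i\<in>{5..<j}. r i) \<le> (\<Sum>i\<in>{5..<k}. r i)"
      using that by (intro sum_mono2) (auto intro!: rnn)
    then show ?thesis unfolding T_def by simp
  qed
  have T_ge: "- 2 * c \<le> T k" if "k \<le> n" for k
  proof -
    have "(\<Sum>i\<in>{5..<k}. r i) \<le> (\<Sum>i\<in>{5..<k}. 2)"
      using that hk by (intro sum_mono) (auto intro: less_imp_le)
    also have "\<dots> \<le> 2 * real n" using that by simp
    finally show ?thesis unfolding T_def using hd hc C_def by simp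
  qed
  have hYx: "S k \<subseteq> {z. 0 \<le> (1, 0) \<bullet> z}" if "5 \<le> k" "k < n" for k
    unfolding SY[OF that(1)] using rpos[OF that(2)] by (intro box_ge) auto
  have hYt: "S k \<subseteq> {z. (0, 1) \<bullet> z \<le> T k}" if "5 \<le> k" "k < n" for k
    unfolding SY[OF that(1)] using rpos[OF that(2)] by (intro box_le) auto
  have hYb: "S k \<subseteq> {z. T (Suc k) \<le> (0, 1) \<bullet> z}" if "5 \<le> k" "k < n" for k
    unfolding SY[OF that(1)] T_Suc[OF that(1)] using rpos[OF that(2)] by (intro box_ge) auto

  have w10: "(1::real, 0::real) \<noteq> 0" by (simp add: zero_prod_def)
  have w01: "(0::real, 1::real) \<noteq> 0" by (simp add: zero_prod_def)
  have wn: "(- si, co) \<noteq> 0" using co_pos by (simp add: zero_prod_def)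
  have D01: "interior (S 0) \<inter> interior (S 1) = {}" by (rule sepR[OF w10 h0x h1x]) simp
  have D02: "interior (S 0) \<inter> interior (S 2) = {}" by (rule sepR[OF w10 h0x h2x]) simp
  have D03: "interior (S 0) \<inter> interior (S 3) = {}" by (rule sepR[OF w01 h0y h3y]) simp
  have D04: "interior (S 0) \<inter> interior (S 4) = {}" by (rule sepL[OF wn h0n h4n]) simp
  have D12: "interior (S 1) \<inter> interior (S 2) = {}" by (rule sepR[OF w01 h1y h2y]) simp
  have D13: "interior (S 1) \<inter> interior (S 3) = {}" by (rule sepL[OF w10 h1x h3x]) simp
  have D14: "interior (S 1) \<inter> interior (S 4) = {}" by (rule sepL[OF wn h1n h4n]) simp
  have D23: "interior (S 2) \<inter> interior (S 3) = {}" by (rule sepL[OF w10 h2x h3x]) simp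
  have D24: "interior (S 2) \<inter> interior (S 4) = {}" by (rule sepL[OF w01 h2y h4y]) simp
  have D34: "interior (S 3) \<inter> interior (S 4) = {}" by (rule sepL[OF w01 h3y h4y]) simp
  have Dsmall: "interior (S i) \<inter> interior (S j) = {}" if "i < j" "j \<le> 4" for i j
  proof -
    have "(i = 0 \<and> j = 1) \<or> (i = 0 \<and> j = 2) \<or> (i = 0 \<and> j = 3) \<or> (i = 0 \<and> j = 4) \<or>
          (i = 1 \<and> j = 2) \<or> (i = 1 \<and> j = 3) \<or> (i = 1 \<and> j = 4) \<or>
          (i = 2 \<and> j = 3) \<or> (i = 2 \<and> j = 4) \<or> (i = 3 \<and> j = 4)" using that by presburger
    then show ?thesis using D01 D02 D03 D04 D12 D13 D14 D23 D24 D34 by (elim disjE conjE) simp_all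
  qed
  have Dbig: "interior (S i) \<inter> interior (S j) = {}" if "i < j" "5 \<le> j" "j < n" for i j
  proof -
    have Tj0: "T j \<le> 0" using T_le[of j] that dpos by simp
    have Tjd: "T j \<le> - 2 * d" using T_le[of j] that by simp
    consider "i = 0" | "i = 1" | "i = 2" | "i = 3" | "i = 4" | "5 \<le> i" by linarith
    then show ?thesis
    proof cases
      case 1 show ?thesis unfolding 1 by (rule sepR[OF w01 h0y hYt[OF that(2,3)] Tj0])
    next
      case 2 show ?thesis unfolding 2 by (rule sepR[OF w01 h1y hYt[OF that(2,3)] Tj0])
    next
      case 3 show ?thesis unfolding 3 by (rule sepL[OF w10 h2x hYx[OF that(2,3)]]) simp
    next
      case 4 show ?thesis unfolding 4 by (rule sepR[OF w01 h3y' hYt[OF that(2,3)] Tjd])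
    next
      case 5 show ?thesis unfolding 5 by (rule sepR[OF w01 h4y hYt[OF that(2,3)] Tj0])
    next
      case 6
      have "T j \<le> T (Suc i)" using that by (intro T_mono) auto
      then show ?thesis using sepR[OF w01 hYb[of i] hYt[OF that(2,3)]] 6 that by simp
    qed
  qed
  have D: "interior (S i) \<inter> interior (S j) = {}" if "i < j" "j < n" for i j
    using Dsmall Dbig that by (cases "j \<le> 4") auto
  have pack: "is_packing n r t p"
    unfolding is_packing_def
  proof (intro conjI allI impI)
    fix i assume "i < n"
    then show "0 < r i" by (rule rpos)
    show "0 \<le> t i" using tau_rng t_def by simp
    show "t i < pi / 2" using tau_rng t_def by simp
  next
    fix i j assume ij: "i < n" "j < n" "i \<noteq> j"
    show "interior (sim_copy (r i) (t i) (p i)) \<inter> interior (sim_copy (r j) (t j) (p j)) = {}"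
    proof (cases "i < j")
      case True then show ?thesis using D[of i j] ij unfolding S_def by simp
    next
      case False then have "j < i" using ij by simp
      then show ?thesis using D[of j i] ij unfolding S_def by blast
    qed
  qed
  have cm: "(i, j) \<in> contacts n r t p" if "z \<in> S i" "z \<in> S j" "i < j" "j < n" for z i j
    using contacts_mem[of z r i t p j n] that unfolding S_def by blast
  have o0: "(0, 0) \<in> S 0" unfolding S0 using apos by (intro box_mem) auto
  have o1: "(0, 0) \<in> S 1" unfolding S1 using bpos by (intro box_mem) auto
  have o2: "(0, 0) \<in> S 2" unfolding S2 using cpos by (intro box_mem) auto
  have o3: "(0, 0) \<in> S 3" unfolding S3 using dpos by (intro box_mem) auto
  have XP: "(x0 + s * co, s * si) \<in> S 4" if "0 \<le> s" "s \<le> 2 * x" for s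
    unfolding S4 pX_def using X_pt[OF xpos cos_tau sin_tau that] .
  have qA0: "(0, 2 * a) \<in> S 0" unfolding S0 using apos by (intro box_mem) auto
  have qA4: "(0, 2 * a) \<in> S 4"
  proof -
    have le1: "2 * a / si \<le> 2 * x" using xsi si_pos by (simp add: divide_le_eq)
    have le0: "0 \<le> 2 * a / si" using apos si_pos by simp
    have "(x0 + 2 * a / si * co, 2 * a / si * si) \<in> S 4" by (rule XP[OF le0 le1])
    moreover have "x0 + 2 * a / si * co = 0" using x0_eq by simp
    moreover have "2 * a / si * si = 2 * a" using si_pos by simp
    ultimately show ?thesis by simp
  qed
  have qB1: "(- 2 * b, 2 * b) \<in> S 1" unfolding S1 using bpos by (intro box_mem) auto
  have qB4: "(- 2 * b, 2 * b) \<in> S 4"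
  proof -
    have le1: "2 * b / si \<le> 2 * x" using xsi si_pos ha hb by (simp add: divide_le_eq)
    have le0: "0 \<le> 2 * b / si" using bpos si_pos by simp
    have "(x0 + 2 * b / si * co, 2 * b / si * si) \<in> S 4" by (rule XP[OF le0 le1])
    moreover have "x0 + 2 * b / si * co = - 2 * b" using x0_eq2 by simp
    moreover have "2 * b / si * si = 2 * b" using si_pos by simp
    ultimately show ?thesis by simp
  qed
  have qV2: "(x0, 0) \<in> S 2" unfolding S2 using cpos x0_le x0_ge by (intro box_mem) auto
  have qV4: "(x0, 0) \<in> S 4" using XP[of 0] xpos by simp
  have qYk: "(0, T k) \<in> S k" if "5 \<le> k" "k < n" for k
    unfolding SY[OF that(1)] using rpos[OF that(2)] by (intro box_mem) auto
  have qY2: "(0, T k) \<in> S 2" if "5 \<le> k" "k < n" for k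
    unfolding S2 using cpos T_le[of k] T_ge[of k] that dpos by (intro box_mem) auto
  have qY3: "(0, T 5) \<in> S 3" unfolding S3 T5 using dpos by (intro box_mem) auto
  have qYp: "(0, T k) \<in> S (k - 1)" if "6 \<le> k" "k < n" for k
  proof -
    have k1: "5 \<le> k - 1" "k - 1 < n" using that by auto
    have Tk: "T k = T (k - 1) - 2 * r (k - 1)" using T_Suc[OF k1(1)] that by simp
    show ?thesis unfolding SY[OF k1(1)] Tk using rpos[OF k1(2)] by (intro box_mem) auto
  qed
  define Base where "Base = {(0::nat,1::nat),(0,2),(0,3),(1,2),(1,3),(2,3),(0,4),(1,4),(2,4)}"
  define A1 where "A1 = (\<lambda>k. (2::nat, k)) ` {5..<n}"
  define A2 where "A2 = (\<lambda>k. (if k = 5 then 3 else k - 1, k)) ` {5..<n}"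
  have n4: "4 < n" using n5 by simp
  have c01: "(0, 1) \<in> contacts n r t p" using cm[OF o0 o1] n4 by simp
  have c02: "(0, 2) \<in> contacts n r t p" using cm[OF o0 o2] n4 by simp
  have c03: "(0, 3) \<in> contacts n r t p" using cm[OF o0 o3] n4 by simp
  have c12: "(1, 2) \<in> contacts n r t p" using cm[OF o1 o2] n4 by simp
  have c13: "(1, 3) \<in> contacts n r t p" using cm[OF o1 o3] n4 by simp
  have c23: "(2, 3) \<in> contacts n r t p" using cm[OF o2 o3] n4 by simp
  have c04: "(0, 4) \<in> contacts n r t p" using cm[OF qA0 qA4] n4 by simp
  have c14: "(1, 4) \<in> contacts n r t p" using cm[OF qB1 qB4] n4 by simp
  have c24: "(2, 4) \<in> contacts n r t p" using cm[OF qV2 qV4] n4 by simp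
  have sBase: "Base \<subseteq> contacts n r t p"
    unfolding Base_def using c01 c02 c03 c12 c13 c23 c04 c14 c24 by (simp only: insert_subset empty_subsetI simp_thms)
  have sA1: "A1 \<subseteq> contacts n r t p"
  proof
    fix e assume "e \<in> A1"
    then obtain k where k: "5 \<le> k" "k < n" "e = (2, k)" unfolding A1_def by auto
    show "e \<in> contacts n r t p" unfolding k(3) using cm[OF qY2[OF k(1,2)] qYk[OF k(1,2)]] k by simp
  qed
  have sA2: "A2 \<subseteq> contacts n r t p"
  proof
    fix e assume "e \<in> A2"
    then obtain k where k: "5 \<le> k" "k < n" "e = (if k = 5 then 3 else k - 1, k)" unfolding A2_def by auto
    show "e \<in> contacts n r t p"
    proof (cases "k = 5")
      case True
      then show ?thesis using k cm[OF qY3 qYk[of 5]] by simp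
    next
      case False
      then have "6 \<le> k" using k by simp
      then show ?thesis using k False cm[OF qYp[OF \<open>6 \<le> k\<close> k(2)] qYk[OF k(1,2)]] by simp
    qed
  qed
  have finC: "finite (contacts n r t p)"
  proof (rule finite_subset)
    show "contacts n r t p \<subseteq> {..<n} \<times> {..<n}" unfolding contacts_def by auto
  qed simp
  have cB: "card Base = 9" unfolding Base_def by simp
  have cA1: "card A1 = n - 5" unfolding A1_def by (subst card_image) (auto simp: inj_on_def)
  have cA2: "card A2 = n - 5" unfolding A2_def by (subst card_image) (auto simp: inj_on_def)
  have sndA: "5 \<le> snd e" if "e \<in> A1 \<union> A2" for e using that unfolding A1_def A2_def by auto
  have sndB: "snd e \<le> 4" if "e \<in> Base" for e using that unfolding Base_def by auto
  have fstA1: "fst e = 2" if "e \<in> A1" for e using that unfolding A1_def by auto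
  have fstA2: "fst e \<noteq> 2" if "e \<in> A2" for e using that unfolding A2_def by (auto split: if_splits)
  have dj1: "Base \<inter> (A1 \<union> A2) = {}"
  proof (rule equals0I)
    fix e assume "e \<in> Base \<inter> (A1 \<union> A2)"
    then show False using sndA[of e] sndB[of e] by simp
  qed
  have dj2: "A1 \<inter> A2 = {}"
  proof (rule equals0I)
    fix e assume "e \<in> A1 \<inter> A2"
    then show False using fstA1[of e] fstA2[of e] by simp
  qed
  have fB: "finite Base" unfolding Base_def by simp
  have fA1: "finite A1" unfolding A1_def by simp
  have fA2: "finite A2" unfolding A2_def by simp
  have "card (Base \<union> (A1 \<union> A2)) = 9 + ((n - 5) + (n - 5))"
    using card_Un_disjoint[OF fB _ dj1] card_Un_disjoint[OF fA1 fA2 dj2] fA1 fA2 cB cA1 cA2 by simp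
  moreover have "card (Base \<union> (A1 \<union> A2)) \<le> card (contacts n r t p)"
    using sBase sA1 sA2 finC by (intro card_mono) auto
  ultimately have "2 * n - 2 < card (contacts n r t p)" using n5 by linarith
  then show ?thesis using pack ai by blast
qed

end
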